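(* Let $A$ be a commutative normed algebra which does not consist entirely of topological divisors of zero (i.e. some element of $A$ is not a TDZ in $A$). If $A$ has approximate units or an approximate identity, then the completion $\mathrm{cl}(A)$ of $A$ is unital. *)

theory Defs
  imports "HOL-Analysis.Analysis"
begin

definition normed_subalgebra :: "'b::real_normed_algebra set \<Rightarrow> bool" where
  "normed_subalgebra A \<longleftrightarrow> 0 \<in> A \<and> (\<forall>x\<in>A. \<forall>y\<in>A. x + y \<in> A \<and> x - y \<in> A \<and> x * y \<in> A)
     \<and> (\<forall>c. \<forall>x\<in>A. c *\<^sub>R x \<in> A)"

definition commutative_on :: "'b::real_normed_algebra set \<Rightarrow> bool" where
  "commutative_on A \<longleftrightarrow> (\<forall>x\<in>A. \<forall>y\<in>A. x * y = y * x)"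

definition tdz_in :: "'b::real_normed_algebra set \<Rightarrow> 'b \<Rightarrow> bool" where
  "tdz_in A x \<longleftrightarrow> x \<in> A \<and>
     (\<exists>z. (\<forall>n. z n \<in> A \<and> norm (z n) = 1) \<and> (\<lambda>n. x * z n) \<longlonglongrightarrow> 0)"

definition has_approx_units :: "'b::real_normed_algebra set \<Rightarrow> bool" where
  "has_approx_units A \<longleftrightarrow> (\<forall>x\<in>A. \<forall>\<epsilon>>0. \<exists>u\<in>A. norm (u * x - x) < \<epsilon>)"

text \<open>A has an approximate identity: a net in A, represented by a proper filter F
  eventually living in A, along which e * x tends to x for every x in A.\<close>
definition has_approx_identity :: "'b::real_normed_algebra set \<Rightarrow> bool" where
  "has_approx_identity A \<longleftrightarrow> (\<exists>F::'b filter. F \<noteq> bot \<and> eventually (\<lambda>e. e \<in> A) F \<and>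
     (\<forall>x\<in>A. ((\<lambda>e. e * x) \<longlongrightarrow> x) F))"

end

theory Submission
  imports Defs
begin

theorem mainTheorem6:
  fixes A :: "'b::{real_normed_algebra, banach} set"
  assumes "normed_subalgebra A"
    and "commutative_on A"
    and "closure A = UNIV"
    and "\<exists>x\<in>A. \<not> tdz_in A x"
    and "has_approx_units A \<or> has_approx_identity A"
  shows "\<exists>e::'b. \<forall>x. e * x = x \<and> x * e = x"
proof -
  have seq: "\<exists>s. (\<forall>n. s n \<in> A) \<and> s \<longlonglongrightarrow> x" for x :: 'b
    using assms(3) closure_sequential by blast
  have comm: "x * y = y * x" for x y :: 'b
  proof -
    obtain s where s: "\<forall>n. s n \<in> A" "s \<longlonglongrightarrow> x" using seq by blast
    obtain t where t: "\<forall>n. t n \<in> A" "t \<longlonglongrightarrow> y" using seq by blast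
    have "(\<lambda>n. s n * t n) \<longlonglongrightarrow> x * y" by (intro tendsto_mult s t)
    moreover have "(\<lambda>n. s n * t n) \<longlonglongrightarrow> y * x"
    proof -
      have "(\<lambda>n. t n * s n) \<longlonglongrightarrow> y * x" by (intro tendsto_mult s t)
      moreover have "t n * s n = s n * t n" for n using assms(2) s t unfolding commutative_on_def by auto
      ultimately show ?thesis by simp
    qed
    ultimately show ?thesis using LIMSEQ_unique by blast
  qed
  have units: "has_approx_units A"
    using assms(5)
  proof
    assume "has_approx_identity A"
    then obtain F where F: "F \<noteq> bot" "eventually (\<lambda>e. e \<in> A) F" "\<forall>x\<in>A. ((\<lambda>e. e * x) \<longlongrightarrow> x) F"
      unfolding has_approx_identity_def by blast
    show ?thesis unfolding has_approx_units_def
    proof (intro ballI allI impI)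
      fix x \<epsilon> :: _ assume x: "x \<in> A" and e: "(\<epsilon>::real) > 0"
      have "eventually (\<lambda>u. dist (u * x) x < \<epsilon>) F" using F(3) x e unfolding tendsto_iff by blast
      hence "eventually (\<lambda>u. u \<in> A \<and> norm (u * x - x) < \<epsilon>) F"
        using F(2) by (auto elim: eventually_mono simp: dist_norm eventually_conj_iff)
      from eventually_happens'[OF F(1) this] show "\<exists>u\<in>A. norm (u * x - x) < \<epsilon>" by blast
    qed
  qed
  obtain a where a: "a \<in> A" "\<not> tdz_in A a" using assms(4) by blast
  have "\<exists>c>0. \<forall>z\<in>A. c * norm z \<le> norm (a * z)"
  proof (rule ccontr)
    assume "\<not> ?thesis"
    hence "\<forall>n::nat. \<exists>z\<in>A. norm (a * z) < (1 / real (Suc n)) * norm z"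
      by (metis divide_pos_pos not_le of_nat_0_less_iff zero_less_Suc zero_less_one)
    then obtain z where z: "\<And>n. z n \<in> A" "\<And>n. norm (a * z n) < (1 / real (Suc n)) * norm (z n)"
      by metis
    have nz: "z n \<noteq> 0" for n using z(2)[of n] by auto
    define w where "w n = scaleR (inverse (norm (z n))) (z n)" for n
    have wA: "w n \<in> A" for n using z(1) assms(1) unfolding w_def normed_subalgebra_def by auto
    have wn: "norm (w n) = 1" for n using nz unfolding w_def by simp
    have "norm (a * w n) < 1 / real (Suc n)" for n
    proof -
      have "norm (a * w n) = norm (a * z n) / norm (z n)"
        unfolding w_def by (simp add: mult_scaleR_right divide_inverse mult.commute)
      also have "\<dots> < 1 / real (Suc n)" using z(2)[of n] nz by (simp add: divide_less_eq)
      finally show ?thesis .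
    qed
    hence "(\<lambda>n. a * w n) \<longlonglongrightarrow> 0" by (rule LIMSEQ_norm_0)
    hence "tdz_in A a" unfolding tdz_in_def using a(1) wA wn by blast
    with a(2) show False by blast
  qed
  then obtain c where c: "c > 0" "\<And>z. z \<in> A \<Longrightarrow> c * norm z \<le> norm (a * z)" by blast
  have cB: "c * norm z \<le> norm (a * z)" for z
  proof -
    obtain s where s: "\<forall>n. s n \<in> A" "s \<longlonglongrightarrow> z" using seq by blast
    have "(\<lambda>n. c * norm (s n)) \<longlonglongrightarrow> c * norm z" by (intro tendsto_intros s)
    moreover have "(\<lambda>n. norm (a * s n)) \<longlonglongrightarrow> norm (a * z)" by (intro tendsto_intros s)
    ultimately show ?thesis by (rule LIMSEQ_le) (use c s in auto)
  qed
  have "\<forall>n::nat. \<exists>u\<in>A. norm (u * a - a) < 1 / real (Suc n)"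
    using units a(1) unfolding has_approx_units_def by simp
  then obtain u where u: "\<And>n. u n \<in> A" "\<And>n. norm (u n * a - a) < 1 / real (Suc n)" by metis
  have "(\<lambda>n. u n * a - a) \<longlonglongrightarrow> 0" using u(2) by (rule LIMSEQ_norm_0)
  hence ua: "(\<lambda>n. u n * a) \<longlonglongrightarrow> a" by (simp add: LIM_zero_iff)
  hence cv: "Cauchy (\<lambda>n. u n * a)" by (rule LIMSEQ_imp_Cauchy)
  have "Cauchy u"
  proof (rule metric_CauchyI)
    fix \<epsilon> :: real assume e: "\<epsilon> > 0"
    then obtain N where N: "\<forall>m\<ge>N. \<forall>n\<ge>N. dist (u m * a) (u n * a) < c * \<epsilon>"
      using cv c(1) unfolding Cauchy_def by (meson mult_pos_pos)
    show "\<exists>M. \<forall>m\<ge>M. \<forall>n\<ge>M. dist (u m) (u n) < \<epsilon>"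
    proof (intro exI allI impI)
      fix m n assume "m \<ge> N" "n \<ge> N"
      have "c * dist (u m) (u n) \<le> norm (a * (u m - u n))" using cB by (simp add: dist_norm)
      also have "\<dots> = dist (u m * a) (u n * a)"
        by (simp add: dist_norm comm[of a] right_diff_distrib)
      also have "\<dots> < c * \<epsilon>" using N \<open>m \<ge> N\<close> \<open>n \<ge> N\<close> by blast
      finally show "dist (u m) (u n) < \<epsilon>" using c(1) by simp
    qed
  qed
  then obtain e where e: "u \<longlonglongrightarrow> e" using Cauchy_convergent_iff convergent_def by blast
  have "(\<lambda>n. u n * a) \<longlonglongrightarrow> e * a" by (intro tendsto_intros e)
  hence ea: "e * a = a" using ua LIMSEQ_unique by blast
  have ex: "e * x = x" for x
  proof -
    have "a * (e * x - x) = (e * a) * x - a * x"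
      by (simp add: right_diff_distrib mult.assoc[symmetric] comm[of a e])
    also have "\<dots> = 0" by (simp add: ea)
    finally have "c * norm (e * x - x) \<le> 0" using cB[of "e * x - x"] by simp
    hence "norm (e * x - x) \<le> 0" using c(1) by (simp add: mult_le_0_iff)
    thus ?thesis by simp
  qed
  show ?thesis using ex comm by metis
qed

end
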